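(* Let $\sigma\in\mathrm{Spin}(\Sigma_g)$. The assignment $\overline{C}\mapsto(-1)^{q_\sigma(C)}i_C$ extends to a well-defined homomorphism of unital $\mathbb{Z}/8$-algebras $\Phi:W_\sigma\to\mathrm{Map}(H_1(\Sigma_g;\mathbb{Z}/2),\mathbb{Z}/8)$.
   Context: $\Sigma_g$ is a closed oriented genus $g$ surface; $\cdot$ is the mod 2 intersection form on $H_1(\Sigma_g;\mathbb{Z}/2)$. To $\sigma\in\mathrm{Spin}(\Sigma_g)$ is associated (Johnson) a quadratic form $q_\sigma:H_1(\Sigma_g;\mathbb{Z}/2)\to\mathbb{Z}/2$, $q_\sigma(y+z)=q_\sigma(y)+q_\sigma(z)+y\cdot z$. For $z\in H_1(\Sigma_g;\mathbb{Z}/2)$, $i_z(y)=1\in\mathbb{Z}/8$ if $z\cdot y\equiv1\pmod2$ and $0$ otherwise. $\mathrm{Map}(H_1(\Sigma_g;\mathbb{Z}/2),\mathbb{Z}/8)$ is a $\mathbb{Z}/8$-algebra under pointwise operations. $W_\sigma$ is the unital associative commutative $\mathbb{Z}/8$-algebra generated by symbols $\overline{C}$, $C\in H_1(\Sigma_g;\mathbb{Z}/2)$, subject to: (i) $\overline{C_1+C_2}=(-1)^{C_1\cdot C_2}\big((-1)^{q_\sigma(C_2)}\overline{C_1}+(-1)^{q_\sigma(C_1)}\overline{C_2}-2\overline{C_1}\,\overline{C_2}\big)$ for all $C_1\ne C_2$; (ii) $\overline{C}^2=(-1)^{q_\sigma(C)}\overline{C}$ for all $C$. *)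

theory Defs
  imports Main "HOL-Library.Numeral_Type" "HOL-Library.Poly_Mapping"
begin

text \<open>Model of H_1(Sigma_g; Z/2): vectors (nat => Z/2) supported on {0..<2g},
  with standard symplectic basis a_i = e_(2i), b_i = e_(2i+1), i < g.
  Z/2 is the numeral type 2, Z/8 is the numeral type 8.\<close>

definition H1 :: "nat \<Rightarrow> (nat \<Rightarrow> 2) set" where
  "H1 g = {x. \<forall>i\<ge>2*g. x i = 0}"

definition hadd :: "(nat \<Rightarrow> 2) \<Rightarrow> (nat \<Rightarrow> 2) \<Rightarrow> (nat \<Rightarrow> 2)" where
  "hadd x y = (\<lambda>i. x i + y i)"

definition idot :: "nat \<Rightarrow> (nat \<Rightarrow> 2) \<Rightarrow> (nat \<Rightarrow> 2) \<Rightarrow> 2" where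
  "idot g x y = (\<Sum>i<g. x (2*i) * y (2*i+1) + x (2*i+1) * y (2*i))"

text \<open>quadratic refinements of the intersection form (Johnson: these are exactly
  the q_sigma, sigma in Spin(Sigma_g))\<close>
definition quadratic_form :: "nat \<Rightarrow> ((nat \<Rightarrow> 2) \<Rightarrow> 2) \<Rightarrow> bool" where
  "quadratic_form g q \<longleftrightarrow>
     (\<forall>y\<in>H1 g. \<forall>z\<in>H1 g. q (hadd y z) = q y + q z + idot g y z)"

definition sgn8 :: "2 \<Rightarrow> 8" where
  "sgn8 a = (if a = 0 then 1 else -1)"

definition i_fun :: "nat \<Rightarrow> (nat \<Rightarrow> 2) \<Rightarrow> (nat \<Rightarrow> 2) \<Rightarrow> 8" where
  "i_fun g z y = (if idot g z y = 1 then 1 else 0)"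

type_synonym poly8 = "((nat \<Rightarrow> 2) \<Rightarrow>\<^sub>0 nat) \<Rightarrow>\<^sub>0 8"

definition Xv :: "(nat \<Rightarrow> 2) \<Rightarrow> poly8" where
  "Xv C = Poly_Mapping.single (Poly_Mapping.single C 1) 1"

definition pscale :: "8 \<Rightarrow> poly8 \<Rightarrow> poly8" where
  "pscale c p = Poly_Mapping.single 0 c * p"

text \<open>Defining relations of W_sigma. Variables X_C with C outside H1 g are
  spurious (not elements of H_1) and are killed, so that poly8 / ideal = W_sigma.\<close>
definition W_relations :: "nat \<Rightarrow> ((nat \<Rightarrow> 2) \<Rightarrow> 2) \<Rightarrow> poly8 set" where
  "W_relations g q =
     {Xv (hadd C1 C2) - pscale (sgn8 (idot g C1 C2))
         (pscale (sgn8 (q C2)) (Xv C1) + pscale (sgn8 (q C1)) (Xv C2) - 2 * Xv C1 * Xv C2)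
        | C1 C2. C1 \<in> H1 g \<and> C2 \<in> H1 g \<and> C1 \<noteq> C2}
   \<union> {Xv C * Xv C - pscale (sgn8 (q C)) (Xv C) | C. C \<in> H1 g}
   \<union> {Xv C | C. C \<notin> H1 g}"

definition ideal_gen :: "'a::comm_ring_1 set \<Rightarrow> 'a set" where
  "ideal_gen R = {p. \<exists>S r. finite S \<and> S \<subseteq> R \<and> p = (\<Sum>s\<in>S. r s * s)}"

text \<open>Unital Z/8-algebra homomorphisms poly8 -> Map(H1 g, Z/8) (pointwise operations
  on H1 g), i.e. functions considered only on the carrier H1 g.\<close>
definition alg_hom_to_Map :: "nat \<Rightarrow> (poly8 \<Rightarrow> (nat \<Rightarrow> 2) \<Rightarrow> 8) \<Rightarrow> bool" where
  "alg_hom_to_Map g \<Phi> \<longleftrightarrow>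
     (\<forall>y\<in>H1 g. \<Phi> 1 y = 1) \<and>
     (\<forall>p p'. \<forall>y\<in>H1 g. \<Phi> (p + p') y = \<Phi> p y + \<Phi> p' y) \<and>
     (\<forall>p p'. \<forall>y\<in>H1 g. \<Phi> (p * p') y = \<Phi> p y * \<Phi> p' y) \<and>
     (\<forall>c p. \<forall>y\<in>H1 g. \<Phi> (pscale c p) y = c * \<Phi> p y)"

end

theory Submission
  imports Defs
begin

definition ev :: "('a::monoid_add \<Rightarrow> 'b::comm_ring_1) \<Rightarrow> ('a \<Rightarrow>\<^sub>0 'b) \<Rightarrow> 'b" where
  "ev f p = (\<Sum>m\<in>Poly_Mapping.keys p. Poly_Mapping.lookup p m * f m)"

lemma ev_superset:
  assumes "finite K" "Poly_Mapping.keys p \<subseteq> K"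
  shows "ev f p = (\<Sum>m\<in>K. Poly_Mapping.lookup p m * f m)"
  unfolding ev_def
  by (rule sum.mono_neutral_left) (use assms in \<open>auto simp: in_keys_iff\<close>)

lemma ev_add: "ev f (p + q) = ev f p + ev f q"
proof -
  let ?K = "Poly_Mapping.keys p \<union> Poly_Mapping.keys q"
  have k: "Poly_Mapping.keys (p+q) \<subseteq> ?K" by (rule keys_add)
  show ?thesis
    by (simp add: ev_superset[OF _ k] ev_superset[of ?K p] ev_superset[of ?K q]
        lookup_add distrib_right sum.distrib)
qed

lemma ev_zero: "ev f 0 = 0" by (simp add: ev_def)

lemma ev_uminus: "ev f (- p) = - ev f p"
  using ev_add[of f p "-p"] by (simp add: ev_zero add_eq_0_iff)

lemma ev_diff: "ev f (p - q) = ev f p - ev f q"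
  using ev_add[of f p "-q"] ev_uminus[of f q] by simp

lemma ev_sum: "ev f (\<Sum>i\<in>I. h i) = (\<Sum>i\<in>I. ev f (h i))"
  by (induction I rule: infinite_finite_induct) (auto simp: ev_zero ev_add)

lemma ev_single: "ev f (Poly_Mapping.single k c) = c * f k"
  by (cases "c = 0") (simp_all add: ev_def)

lemma pm_expand: "p = (\<Sum>m\<in>Poly_Mapping.keys p. Poly_Mapping.single m (Poly_Mapping.lookup p m))"
proof (rule poly_mapping_eqI)
  fix k
  have "Poly_Mapping.lookup (\<Sum>m\<in>Poly_Mapping.keys p. Poly_Mapping.single m (Poly_Mapping.lookup p m)) k
      = (\<Sum>m\<in>Poly_Mapping.keys p. (if m = k then Poly_Mapping.lookup p m else 0))"
    by (simp add: lookup_sum lookup_single when_def eq_commute)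
  also have "\<dots> = Poly_Mapping.lookup p k"
    by (simp add: sum.delta in_keys_iff)
  finally show "Poly_Mapping.lookup p k = Poly_Mapping.lookup (\<Sum>m\<in>Poly_Mapping.keys p. Poly_Mapping.single m (Poly_Mapping.lookup p m)) k" by simp
qed

lemma ev_mult:
  assumes f: "\<And>a b. f (a + b) = f a * f b"
  shows "ev f (p * q) = ev f p * ev f q"
proof -
  let ?P = "Poly_Mapping.keys p" and ?Q = "Poly_Mapping.keys q"
  let ?sp = "\<lambda>m. Poly_Mapping.single m (Poly_Mapping.lookup p m)"
  let ?sq = "\<lambda>m. Poly_Mapping.single m (Poly_Mapping.lookup q m)"
  have "p * q = (\<Sum>m\<in>?P. ?sp m) * (\<Sum>n\<in>?Q. ?sq n)"
    using pm_expand[of p] pm_expand[of q] by simp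
  also have "\<dots> = (\<Sum>m\<in>?P. \<Sum>n\<in>?Q. ?sp m * ?sq n)"
    by (simp add: sum_product)
  finally have "ev f (p*q) = (\<Sum>m\<in>?P. \<Sum>n\<in>?Q. ev f (?sp m * ?sq n))"
    by (simp add: ev_sum)
  also have "\<dots> = (\<Sum>m\<in>?P. \<Sum>n\<in>?Q. (Poly_Mapping.lookup p m * f m) * (Poly_Mapping.lookup q n * f n))"
    by (simp add: mult_single ev_single f mult_ac)
  also have "\<dots> = ev f p * ev f q"
    by (simp add: ev_def sum_product)
  finally show ?thesis .
qed

definition fm :: "('a \<Rightarrow> 'b::comm_ring_1) \<Rightarrow> ('a \<Rightarrow>\<^sub>0 nat) \<Rightarrow> 'b" where
  "fm v m = (\<Prod>C\<in>Poly_Mapping.keys m. v C ^ Poly_Mapping.lookup m C)"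

lemma fm_superset:
  assumes "finite K" "Poly_Mapping.keys m \<subseteq> K"
  shows "fm v m = (\<Prod>C\<in>K. v C ^ Poly_Mapping.lookup m C)"
  unfolding fm_def
  by (rule prod.mono_neutral_left) (use assms in \<open>auto simp: in_keys_iff\<close>)

lemma fm_add: "fm v (a + b) = fm v a * fm v b"
proof -
  let ?K = "Poly_Mapping.keys a \<union> Poly_Mapping.keys b"
  have k: "Poly_Mapping.keys (a+b) \<subseteq> ?K" by (rule keys_add)
  show ?thesis
    by (simp add: fm_superset[OF _ k] fm_superset[of ?K a] fm_superset[of ?K b]
        lookup_add power_add prod.distrib)
qed

lemma fm_zero: "fm v 0 = 1" by (simp add: fm_def)

lemma fm_single1: "fm v (Poly_Mapping.single C 1) = v C" unfolding fm_def by simp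

lemma ev_one: "ev (fm v) 1 = 1"
  by (metis ev_single fm_zero mult_1 single_one)

lemma ev_pscale: "ev (fm v) (pscale c p) = c * ev (fm v) p"
  by (simp add: pscale_def ev_mult fm_add ev_single fm_zero)

lemma ev_numeral: "ev (fm v) (numeral n) = numeral n"
  by (metis ev_single fm_zero mult_1_right single_numeral)

lemma ev_Xv: "ev (fm v) (Xv C) = v C"
  unfolding Xv_def ev_single fm_single1 by simp

lemma two_cases: "(x::2) = 0 \<or> x = 1"
proof (cases x)
  case (of_int z)
  then have "z = 0 \<or> z = 1" by auto
  then show ?thesis using of_int by auto
qed

lemma key_arith:
  fixes a b c d e :: 2
  shows "sgn8 (a + b + c) * (if d + e = 1 then 1 else 0) =
    sgn8 c * (sgn8 b * (sgn8 a * (if d = 1 then 1 else 0)) + sgn8 a * (sgn8 b * (if e = 1 then 1 else 0))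
      - 2 * (sgn8 a * (if d = 1 then 1 else 0)) * (sgn8 b * (if e = 1 then 1 else 0)))"
  using two_cases[of a] two_cases[of b] two_cases[of c] two_cases[of d] two_cases[of e]
  by (auto simp: sgn8_def)

lemma sq_arith:
  fixes a d :: 2
  shows "(sgn8 a * (if d = 1 then 1 else 0)) * (sgn8 a * (if d = 1 then 1 else 0)) = sgn8 a * (sgn8 a * (if d = 1 then 1 else 0))"
  using two_cases[of a] two_cases[of d] by (auto simp: sgn8_def)

lemma idot_hadd: "idot g (hadd x z) y = idot g x y + idot g z y"
  by (simp add: idot_def hadd_def sum.distrib[symmetric] algebra_simps)

lemma hadd_H1: "x \<in> H1 g \<Longrightarrow> z \<in> H1 g \<Longrightarrow> hadd x z \<in> H1 g"
  by (simp add: H1_def hadd_def)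

theorem proposition6p2:
  fixes g :: nat and q :: "(nat \<Rightarrow> 2) \<Rightarrow> 2"
  assumes "quadratic_form g q"
  shows "\<exists>\<Phi>. alg_hom_to_Map g \<Phi>
           \<and> (\<forall>p\<in>ideal_gen (W_relations g q). \<forall>y\<in>H1 g. \<Phi> p y = 0)
           \<and> (\<forall>C\<in>H1 g. \<forall>y\<in>H1 g. \<Phi> (Xv C) y = sgn8 (q C) * i_fun g C y)"
proof -
  define v where "v y C = (if C \<in> H1 g then sgn8 (q C) * i_fun g C y else 0)" for y C
  define \<Phi> where "\<Phi> p y = ev (fm (v y)) p" for p y
  have hom: "alg_hom_to_Map g \<Phi>"
    unfolding alg_hom_to_Map_def \<Phi>_def
    by (simp add: ev_one ev_add ev_mult fm_add ev_pscale)
  have rel: "\<Phi> r y = 0" if r: "r \<in> W_relations g q" and y: "y \<in> H1 g" for r y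
  proof -
    from r consider
      (a) C1 C2 where "C1 \<in> H1 g" "C2 \<in> H1 g" "r = Xv (hadd C1 C2) - pscale (sgn8 (idot g C1 C2))
         (pscale (sgn8 (q C2)) (Xv C1) + pscale (sgn8 (q C1)) (Xv C2) - 2 * Xv C1 * Xv C2)"
      | (b) C where "C \<in> H1 g" "r = Xv C * Xv C - pscale (sgn8 (q C)) (Xv C)"
      | (c) C where "C \<notin> H1 g" "r = Xv C"
      unfolding W_relations_def by blast
    then show ?thesis
    proof cases
      case a
      have q: "q (hadd C1 C2) = q C1 + q C2 + idot g C1 C2"
        using assms a unfolding quadratic_form_def by blast
      show ?thesis
        using a hadd_H1[OF a(1,2)]
        by (simp add: \<Phi>_def ev_diff ev_add ev_mult fm_add ev_pscale ev_Xv ev_numeral v_def q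
            i_fun_def idot_hadd key_arith)
    next
      case b
      then show ?thesis
        by (simp add: \<Phi>_def ev_diff ev_mult fm_add ev_pscale ev_Xv v_def i_fun_def sq_arith)
    next
      case c
      then show ?thesis by (simp add: \<Phi>_def ev_Xv v_def)
    qed
  qed
  have ideal: "\<forall>p\<in>ideal_gen (W_relations g q). \<forall>y\<in>H1 g. \<Phi> p y = 0"
  proof (intro ballI)
    fix p y assume p: "p \<in> ideal_gen (W_relations g q)" and y: "y \<in> H1 g"
    then obtain S r where S: "finite S" "S \<subseteq> W_relations g q" "p = (\<Sum>s\<in>S. r s * s)"
      unfolding ideal_gen_def by blast
    have "\<Phi> p y = (\<Sum>s\<in>S. \<Phi> (r s) y * \<Phi> s y)"
      using S(3) by (simp add: \<Phi>_def ev_sum ev_mult fm_add)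
    also have "\<dots> = 0" using S(2) rel y by (auto intro!: sum.neutral)
    finally show "\<Phi> p y = 0" .
  qed
  have gen: "\<forall>C\<in>H1 g. \<forall>y\<in>H1 g. \<Phi> (Xv C) y = sgn8 (q C) * i_fun g C y"
    by (simp add: \<Phi>_def ev_Xv v_def)
  show ?thesis using hom ideal gen by blast
qed

end
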